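(* Let $X$ be a path connected topological quandle. Then $H_0(X)$ and $H^R_1(X)$ are isomorphic.
   Context: A quandle is a set with a binary operation $\triangleright$ such that $x\triangleright x=x$, each $\beta_y(x)=x\triangleright y$ is bijective, and $(x\triangleright y)\triangleright z=(x\triangleright z)\triangleright(y\triangleright z)$. A topological quandle is a topological space with a continuous quandle operation such that every $\beta_y$ is a homeomorphism. $C_0(X)$ is the free abelian group on points of $X$ (constant 0-simplices $\sigma_x$), $C_1(X)$ the free abelian group on paths $\sigma:[0,1]\to X$; for a path $\sigma_{[a,b]}$ from $a$ to $b$, $\partial_1\sigma_{[a,b]}=\sigma_a-\sigma_{a\triangleright b}$; $H_0(X)=C_0(X)/\partial_1(C_1(X))$. The rack chain complex $C^R_n(X)$ is the free abelian group on $n$-tuples $(x_1,\dots,x_n)\in X^n$ with boundary $\partial^R_n(x_1,\dots,x_n)=\sum_{i=2}^n(-1)^i\big[(x_1,\dots,\hat{x_i},\dots,x_n)-(x_1\triangleright x_i,\dots,x_{i-1}\triangleright x_i,x_{i+1},\dots,x_n)\big]$; $H^R_n(X)$ is its $n$-th homology. In particular $H^R_1(X)=C^R_1(X)/\partial^R_2(C^R_2(X))$ with $\partial^R_2(x_1,x_2)=(x_1)-(x_1\triangleright x_2)$. *)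

theory Defs
  imports "HOL-Analysis.Analysis" "HOL-Algebra.Free_Abelian_Groups"
begin

text \<open>A quandle structure on a carrier set Q with operation op (op x y = x \<triangleright> y).\<close>
definition quandle_on :: "'a set \<Rightarrow> ('a \<Rightarrow> 'a \<Rightarrow> 'a) \<Rightarrow> bool" where
  "quandle_on Q op \<longleftrightarrow>
     (\<forall>x\<in>Q. \<forall>y\<in>Q. op x y \<in> Q) \<and>
     (\<forall>x\<in>Q. op x x = x) \<and>
     (\<forall>y\<in>Q. bij_betw (\<lambda>x. op x y) Q Q) \<and>
     (\<forall>x\<in>Q. \<forall>y\<in>Q. \<forall>z\<in>Q. op (op x y) z = op (op x z) (op y z))"

definition topological_quandle :: "'a topology \<Rightarrow> ('a \<Rightarrow> 'a \<Rightarrow> 'a) \<Rightarrow> bool" where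
  "topological_quandle X op \<longleftrightarrow>
     quandle_on (topspace X) op \<and>
     continuous_map (prod_topology X X) X (\<lambda>(x, y). op x y) \<and>
     (\<forall>y\<in>topspace X. homeomorphic_map X X (\<lambda>x. op x y))"

definition C0 :: "'a topology \<Rightarrow> ('a \<Rightarrow>\<^sub>0 int) monoid" where
  "C0 X = free_Abelian_group (topspace X)"

definition C1 :: "'a topology \<Rightarrow> ((real \<Rightarrow> 'a) \<Rightarrow>\<^sub>0 int) monoid" where
  "C1 X = free_Abelian_group {\<sigma>. pathin X \<sigma>}"

definition boundary1 :: "('a \<Rightarrow> 'a \<Rightarrow> 'a) \<Rightarrow> ((real \<Rightarrow> 'a) \<Rightarrow>\<^sub>0 int) \<Rightarrow> ('a \<Rightarrow>\<^sub>0 int)" where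
  "boundary1 op = frag_extend (\<lambda>\<sigma>. frag_of (\<sigma> 0) - frag_of (op (\<sigma> 0) (\<sigma> 1)))"

definition H0 :: "'a topology \<Rightarrow> ('a \<Rightarrow> 'a \<Rightarrow> 'a) \<Rightarrow> ('a \<Rightarrow>\<^sub>0 int) set monoid" where
  "H0 X op = C0 X Mod (boundary1 op ` carrier (C1 X))"

definition CR1 :: "'a set \<Rightarrow> ('a \<Rightarrow>\<^sub>0 int) monoid" where
  "CR1 Q = free_Abelian_group Q"

definition CR2 :: "'a set \<Rightarrow> (('a \<times> 'a) \<Rightarrow>\<^sub>0 int) monoid" where
  "CR2 Q = free_Abelian_group (Q \<times> Q)"

definition rack_boundary2 :: "('a \<Rightarrow> 'a \<Rightarrow> 'a) \<Rightarrow> (('a \<times> 'a) \<Rightarrow>\<^sub>0 int) \<Rightarrow> ('a \<Rightarrow>\<^sub>0 int)" where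
  "rack_boundary2 op = frag_extend (\<lambda>(x1, x2). frag_of x1 - frag_of (op x1 x2))"

definition HR1 :: "'a set \<Rightarrow> ('a \<Rightarrow> 'a \<Rightarrow> 'a) \<Rightarrow> ('a \<Rightarrow>\<^sub>0 int) set monoid" where
  "HR1 Q op = CR1 Q Mod (rack_boundary2 op ` carrier (CR2 Q))"

end

theory Submission
  imports Defs
begin

theorem mainTheorem9:
  fixes X :: "'a topology" and op :: "'a \<Rightarrow> 'a \<Rightarrow> 'a"
  assumes "topological_quandle X op"
    and "path_connected_space X"
  shows "H0 X op \<cong> HR1 (topspace X) op"
proof -
  let ?Q = "topspace X"
  have A: "boundary1 op ` carrier (C1 X) \<subseteq> rack_boundary2 op ` carrier (CR2 ?Q)"
  proof
    fix y assume "y \<in> boundary1 op ` carrier (C1 X)"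
    then obtain c where c: "Poly_Mapping.keys c \<subseteq> {\<sigma>. pathin X \<sigma>}" and y: "y = boundary1 op c"
      by (auto simp: C1_def)
    have "\<exists>d. Poly_Mapping.keys d \<subseteq> ?Q \<times> ?Q \<and> rack_boundary2 op d = boundary1 op c"
      using c
    proof (induction c rule: frag_induction)
      case zero
      then show ?case by (intro exI[of _ 0]) (simp add: rack_boundary2_def boundary1_def)
    next
      case (one \<sigma>)
      then have "\<sigma> 0 \<in> ?Q" "\<sigma> 1 \<in> ?Q" by (auto simp: pathin_def continuous_map_def)
      then show ?case
        by (intro exI[of _ "frag_of (\<sigma> 0, \<sigma> 1)"]) (simp add: rack_boundary2_def boundary1_def)
    next
      case (diff a b)
      then obtain da db where "Poly_Mapping.keys da \<subseteq> ?Q \<times> ?Q" "rack_boundary2 op da = boundary1 op a"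
        "Poly_Mapping.keys db \<subseteq> ?Q \<times> ?Q" "rack_boundary2 op db = boundary1 op b" by blast
      then show ?case
        by (intro exI[of _ "da - db"]) (use keys_diff[of da db] in \<open>auto simp: rack_boundary2_def boundary1_def frag_extend_diff\<close>)
    qed
    then show "y \<in> rack_boundary2 op ` carrier (CR2 ?Q)" using y unfolding CR2_def by (metis carrier_free_Abelian_group_iff image_eqI)
  qed
  have B: "rack_boundary2 op ` carrier (CR2 ?Q) \<subseteq> boundary1 op ` carrier (C1 X)"
  proof
    fix y assume "y \<in> rack_boundary2 op ` carrier (CR2 ?Q)"
    then obtain c where c: "Poly_Mapping.keys c \<subseteq> ?Q \<times> ?Q" and y: "y = rack_boundary2 op c"
      by (auto simp: CR2_def)
    have "\<exists>d. Poly_Mapping.keys d \<subseteq> {\<sigma>. pathin X \<sigma>} \<and> boundary1 op d = rack_boundary2 op c"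
      using c
    proof (induction c rule: frag_induction)
      case zero
      then show ?case by (intro exI[of _ 0]) (simp add: rack_boundary2_def boundary1_def)
    next
      case (one p)
      then obtain a b where p: "p = (a, b)" "a \<in> ?Q" "b \<in> ?Q" by auto
      then obtain g where "pathin X g" "g 0 = a" "g 1 = b"
        using assms(2) unfolding path_connected_space_def by blast
      then show ?case
        by (intro exI[of _ "frag_of g"]) (simp add: rack_boundary2_def boundary1_def p)
    next
      case (diff a b)
      then obtain da db where "Poly_Mapping.keys da \<subseteq> {\<sigma>. pathin X \<sigma>}" "boundary1 op da = rack_boundary2 op a"
        "Poly_Mapping.keys db \<subseteq> {\<sigma>. pathin X \<sigma>}" "boundary1 op db = rack_boundary2 op b" by blast
      then show ?case
        by (intro exI[of _ "da - db"]) (use keys_diff[of da db] in \<open>auto simp: rack_boundary2_def boundary1_def frag_extend_diff\<close>)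
    qed
    then show "y \<in> boundary1 op ` carrier (C1 X)" using y unfolding C1_def by (metis carrier_free_Abelian_group_iff image_eqI)
  qed
  have "H0 X op = HR1 ?Q op"
    unfolding H0_def HR1_def using A B by (simp add: C0_def CR1_def)
  then show ?thesis by simp
qed

end
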